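(* Let $\mathfrak d$ be a delta operator on $\mathbb K[x]$ with basic sequence $(p_n(x))_{n\ge0}$. For each $i\in\mathbb N$ let $\Phi_i=\sum_{j\ge0}a^{(i)}_j\,\mathfrak d^{\,i+j}$, where $a^{(i)}_j\in\mathbb K$ and $a^{(i)}_0\neq0$ (the sum acts on each polynomial as a finite sum, since $\mathfrak d$ lowers degree by one). (1) There exists a unique sequence $(f_n(x))_{n\ge0}$ of polynomials with $\deg f_n=n$ such that $\varepsilon_0(\Phi_i(f_n))=n!\,\delta_{i,n}$ for all $i,n\in\mathbb N$. Moreover, for every $n$, $$f_n(x)=\frac{n!}{a^{(0)}_0a^{(1)}_0\cdots a^{(n)}_0}\det\Lambda^{(n)},$$ where $\Lambda^{(n)}$ is the $(n+1)\times(n+1)$ matrix (rows and columns indexed by $0,\dots,n$, entries in $\mathbb K[x]$) with $(i,j)$-entry equal to $a^{(i)}_{j-i}$ if $0\le i\le\min(j,n-1)$, equal to $p_j(x)/j!$ if $i=n$, and $0$ otherwise. (2) The sequence $(f_n(x))_{n\ge0}$ is a basis of $\mathbb K[x]$, and for every $f\in\mathbb K[x]$, $$f(x)=\sum_{n=0}^{\deg f}\frac{\varepsilon_0(\Phi_n(f))}{n!}\,f_n(x).$$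
   Context: $\mathbb K$ is a field of characteristic zero. For $a\in\mathbb K$, $E_a$ is the shift operator $f(x)\mapsto f(x+a)$ on $\mathbb K[x]$; a linear operator $S$ on $\mathbb K[x]$ is shift-invariant if $SE_a=E_aS$ for all $a\in\mathbb K$. A delta operator is a shift-invariant linear operator $\mathfrak d$ on $\mathbb K[x]$ such that $\mathfrak d(x)$ is a nonzero constant. The basic sequence of $\mathfrak d$ is the unique sequence of polynomials $(p_n(x))_{n\ge0}$ with $\deg p_n=n$, $p_0=1$, $p_n(0)=0$ for $n\ge1$, and $\mathfrak d(p_n)=np_{n-1}$ for $n\ge1$. For $z\in\mathbb K$, $\varepsilon_z$ denotes evaluation at $z$. $\delta_{i,n}$ is the Kronecker delta. *)

theory Defs
  imports "HOL-Computational_Algebra.Polynomial" "Jordan_Normal_Form.Determinant"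
begin

definition lin_op :: "('a::field poly \<Rightarrow> 'a poly) \<Rightarrow> bool" where
  "lin_op S \<longleftrightarrow> (\<forall>f g. S (f + g) = S f + S g) \<and> (\<forall>c f. S (smult c f) = smult c (S f))"

definition shift_op :: "'a::field \<Rightarrow> 'a poly \<Rightarrow> 'a poly" where
  "shift_op c f = pcompose f [:c, 1:]"

definition shift_invariant :: "('a::field poly \<Rightarrow> 'a poly) \<Rightarrow> bool" where
  "shift_invariant S \<longleftrightarrow> lin_op S \<and> (\<forall>c f. S (shift_op c f) = shift_op c (S f))"

definition delta_op :: "('a::field poly \<Rightarrow> 'a poly) \<Rightarrow> bool" where
  "delta_op d \<longleftrightarrow> shift_invariant d \<and> (\<exists>c. c \<noteq> 0 \<and> d [:0, 1:] = [:c:])"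

definition basic_seq :: "('a::field poly \<Rightarrow> 'a poly) \<Rightarrow> (nat \<Rightarrow> 'a poly) \<Rightarrow> bool" where
  "basic_seq d p \<longleftrightarrow> (\<forall>n. degree (p n) = n) \<and> p 0 = 1 \<and>
     (\<forall>n\<ge>1. poly (p n) 0 = 0) \<and> (\<forall>n\<ge>1. d (p n) = smult (of_nat n) (p (n - 1)))"

text \<open>Phi_i = sum_j a i j * d^(i+j), applied to f (finite sum: terms with j > degree f vanish).\<close>
definition Phi :: "(nat \<Rightarrow> nat \<Rightarrow> 'a::field) \<Rightarrow> ('a poly \<Rightarrow> 'a poly) \<Rightarrow> nat \<Rightarrow> 'a poly \<Rightarrow> 'a poly" where
  "Phi a d i f = (\<Sum>j\<le>degree f. smult (a i j) ((d ^^ (i + j)) f))"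

definition Lambda_mat :: "(nat \<Rightarrow> nat \<Rightarrow> 'a::field_char_0) \<Rightarrow> (nat \<Rightarrow> 'a poly) \<Rightarrow> nat \<Rightarrow> 'a poly mat" where
  "Lambda_mat a p n = mat (n + 1) (n + 1) (\<lambda>(i, j).
     if i < n \<and> i \<le> j then [: a i (j - i) :]
     else if i = n then smult (1 / fact j) (p j)
     else 0)"

definition poly_seq_basis :: "(nat \<Rightarrow> 'a::field poly) \<Rightarrow> bool" where
  "poly_seq_basis f \<longleftrightarrow>
     (\<forall>g. \<exists>c N. g = (\<Sum>n\<le>N. smult (c n) (f n))) \<and>
     (\<forall>c N. (\<Sum>n\<le>N. smult (c n) (f n)) = 0 \<longrightarrow> (\<forall>n\<le>N. c n = 0))"

end

theory Submission
  imports Defs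
begin

lemma smult_sum_right: "smult c (sum f A) = (\<Sum>x\<in>A. smult c (f x))"
  by (induction A rule: infinite_finite_induct) (auto simp: smult_add_right)

locale dsetting =
  fixes d :: "'a::field_char_0 poly \<Rightarrow> 'a poly" and p :: "nat \<Rightarrow> 'a poly"
  assumes delta: "delta_op d" and bs: "basic_seq d p"
begin

lemma lin_add: "d (f + g) = d f + d g"
  using delta unfolding delta_op_def shift_invariant_def lin_op_def by blast

lemma lin_smult: "d (smult c f) = smult c (d f)"
  using delta unfolding delta_op_def shift_invariant_def lin_op_def by blast

lemma d_zero: "d 0 = 0"
  using lin_smult[of 0 0] by simp

lemma d_one: "d 1 = 0"
proof -
  obtain c where c: "d [:0, 1:] = [:c:]" using delta unfolding delta_op_def by blast
  have sh: "\<And>f. d (shift_op 1 f) = shift_op 1 (d f)"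
    using delta unfolding delta_op_def shift_invariant_def by blast
  have "shift_op 1 [:0, 1:] = [:0,1:] + (1::'a poly)"
    by (simp add: shift_op_def one_pCons pcompose_pCons)
  hence "d ([:0,1:] + 1) = shift_op 1 [:c:]" using sh[of "[:0,1:]"] c by simp
  also have "\<dots> = [:c:]" by (simp add: shift_op_def)
  finally show ?thesis using c lin_add by simp
qed

lemma dpow_add: "(d ^^ m) (f + g) = (d ^^ m) f + (d ^^ m) g"
  by (induction m) (auto simp: lin_add)

lemma dpow_smult: "(d ^^ m) (smult c f) = smult c ((d ^^ m) f)"
  by (induction m) (auto simp: lin_smult)

lemma dpow_zero0: "(d ^^ m) 0 = 0"
  by (induction m) (auto simp: d_zero)

lemma dpow_diff: "(d ^^ m) (f - g) = (d ^^ m) f - (d ^^ m) g"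
proof -
  have "(d ^^ m) (f - g) = (d ^^ m) (f + smult (-1) g)" by simp
  also have "\<dots> = (d ^^ m) f + smult (-1) ((d ^^ m) g)" by (simp only: dpow_add dpow_smult)
  finally show ?thesis by simp
qed

lemma dpow_sum: "(d ^^ m) (sum f A) = (\<Sum>x\<in>A. (d ^^ m) (f x))"
  by (induction A rule: infinite_finite_induct) (auto simp: dpow_add dpow_zero0)

definition q :: "nat \<Rightarrow> 'a poly" where "q k = smult (1 / fact k) (p k)"

lemma q0: "q 0 = 1"
  using bs unfolding q_def basic_seq_def by simp

lemma deg_q: "degree (q k) = k"
  using bs unfolding q_def basic_seq_def by simp

lemma dq_Suc: "d (q (Suc k)) = q k"
proof -
  have "d (p (Suc k)) = smult (of_nat (Suc k)) (p k)" using bs unfolding basic_seq_def by auto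
  hence "d (q (Suc k)) = smult (1 / fact (Suc k) * of_nat (Suc k)) (p k)"
    unfolding q_def by (simp add: lin_smult)
  also have "1 / fact (Suc k) * (of_nat (Suc k) :: 'a) = 1 / fact k"
  proof -
    have "(of_nat (Suc k)::'a) \<noteq> 0" by (rule of_nat_neq_0)
    moreover have "(fact k :: 'a) \<noteq> 0" by simp
    ultimately show ?thesis by (simp only: fact_Suc of_nat_mult) (simp add: field_simps, metis distrib_left mult.right_neutral no_zero_divisors fact_nonzero)
  qed
  finally show ?thesis unfolding q_def .
qed

lemma dq0: "d (q 0) = 0" by (simp add: q0 d_one)

lemma dpow_q: "(d ^^ m) (q k) = (if m \<le> k then q (k - m) else 0)"
proof (induction m)
  case 0 then show ?case by simp
next
  case (Suc m)
  show ?case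
  proof (cases "Suc m \<le> k")
    case True
    then have "k - m = Suc (k - Suc m)" by simp
    then show ?thesis using Suc True by (simp add: dq_Suc)
  next
    case False
    then show ?thesis using Suc by (auto simp: dq0 d_zero)
  qed
qed

lemma q_at0: "poly (q k) 0 = (if k = 0 then 1 else 0)"
  using bs unfolding q_def basic_seq_def by (auto simp: q0[unfolded q_def])

definition cf :: "'a poly \<Rightarrow> nat \<Rightarrow> 'a" where "cf g k = poly ((d ^^ k) g) 0"

lemma cf_q: "cf (q k) m = (if m = k then 1 else 0)"
  unfolding cf_def dpow_q by (auto simp: q_at0)

lemma cf_add: "cf (f + g) k = cf f k + cf g k" unfolding cf_def by (simp add: dpow_add)
lemma cf_diff: "cf (f - g) k = cf f k - cf g k" unfolding cf_def by (simp add: dpow_diff)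
lemma cf_smult: "cf (smult c f) k = c * cf f k" unfolding cf_def by (simp add: dpow_smult)
lemma cf_sum: "cf (sum f A) k = (\<Sum>x\<in>A. cf (f x) k)" unfolding cf_def by (simp add: dpow_sum poly_sum)
lemma cf_0: "cf 0 k = 0" unfolding cf_def by (simp add: dpow_zero0)

lemma span: "degree g \<le> N \<Longrightarrow> \<exists>c. g = (\<Sum>k\<le>N. smult (c k) (q k))"
proof (induction N arbitrary: g)
  case 0
  then obtain c where "g = [:c:]" by (metis degree_eq_zeroE le_zero_eq)
  then have "g = (\<Sum>k\<le>0. smult ((\<lambda>_. c) k) (q k))" by (simp add: q0)
  then show ?case by (rule exI[of _ "\<lambda>_. c"])
next
  case (Suc N)
  define lc where "lc = coeff g (Suc N) / lead_coeff (q (Suc N))"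
  define r where "r = g - smult lc (q (Suc N))"
  have "q (Suc N) \<noteq> 0" by (metis deg_q degree_0 nat.distinct(1))
  then have lq: "lead_coeff (q (Suc N)) \<noteq> 0" by simp
  have "degree r \<le> N"
  proof (rule degree_le, intro allI impI)
    fix i assume "N < i"
    show "coeff r i = 0"
    proof (cases "i = Suc N")
      case True
      then show ?thesis unfolding r_def lc_def using lq deg_q[of "Suc N"] by simp
    next
      case False
      then have "Suc N < i" using \<open>N < i\<close> by simp
      then show ?thesis unfolding r_def using Suc.prems deg_q[of "Suc N"]
        by (simp add: coeff_eq_0)
    qed
  qed
  then obtain c where c: "r = (\<Sum>k\<le>N. smult (c k) (q k))" using Suc.IH by blast
  define c' where "c' = c(Suc N := lc)"
  have "(\<Sum>k\<le>Suc N. smult (c' k) (q k)) = (\<Sum>k\<le>N. smult (c k) (q k)) + smult lc (q (Suc N))"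
    unfolding c'_def by (simp add: sum.atMost_Suc)
  also have "\<dots> = g" using c unfolding r_def by (metis diff_add_cancel)
  finally show ?case by metis
qed

lemma cf_comb: "cf (\<Sum>k\<le>N. smult (c k) (q k)) m = (if m \<le> N then c m else 0)"
  by (simp add: cf_sum cf_smult cf_q if_distrib[where f="\<lambda>x. _ * x"] sum.delta cong: if_cong)

lemma expand: "degree g \<le> N \<Longrightarrow> g = (\<Sum>k\<le>N. smult (cf g k) (q k))"
proof -
  assume "degree g \<le> N"
  then obtain c where c: "g = (\<Sum>k\<le>N. smult (c k) (q k))" using span by blast
  have "\<And>k. k \<in> {..N} \<Longrightarrow> cf g k = c k" using c cf_comb by (metis atMost_iff)
  then show ?thesis using c by (metis (no_types, lifting) sum.cong)
qed

lemma cf_zero: "degree g < m \<Longrightarrow> cf g m = 0"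
proof -
  assume "degree g < m"
  obtain c where c: "g = (\<Sum>k\<le>degree g. smult (c k) (q k))" using span by blast
  show ?thesis using c cf_comb \<open>degree g < m\<close> by (metis not_le)
qed

lemma dpow_vanish: "degree g < m \<Longrightarrow> (d ^^ m) g = 0"
proof -
  assume a: "degree g < m"
  have "(d ^^ m) g = (\<Sum>k\<le>degree g. smult (cf g k) ((d ^^ m) (q k)))"
    by (subst expand[of g "degree g"]) (simp_all add: dpow_sum dpow_smult)
  also have "\<dots> = 0" using a by (intro sum.neutral) (auto simp: dpow_q)
  finally show ?thesis .
qed

lemma deg_comb_le: "degree (\<Sum>k\<le>N. smult (c k) (q k)) \<le> N"
  by (rule degree_sum_le) (auto intro: order.trans[OF degree_smult_le] simp: deg_q)

lemma coeff_comb: "coeff (\<Sum>k\<le>N. smult (c k) (q k)) N = c N * lead_coeff (q N)"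
proof -
  have "coeff (\<Sum>k\<le>N. smult (c k) (q k)) N = (\<Sum>k\<le>N. c k * coeff (q k) N)"
    by (simp add: coeff_sum)
  also have "\<dots> = c N * coeff (q N) N + (\<Sum>k\<in>{..N}-{N}. c k * coeff (q k) N)"
    by (subst sum.remove[of _ N]) auto
  also have "(\<Sum>k\<in>{..N}-{N}. c k * coeff (q k) N) = 0"
    by (intro sum.neutral) (auto simp: coeff_eq_0 deg_q)
  finally show ?thesis by (simp add: deg_q)
qed

lemma deg_comb_eq: "c N \<noteq> 0 \<Longrightarrow> degree (\<Sum>k\<le>N. smult (c k) (q k)) = N"
proof -
  assume "c N \<noteq> 0"
  moreover have "lead_coeff (q N) \<noteq> 0"
    by (metis deg_q degree_0 leading_coeff_0_iff q0 one_neq_zero)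
  ultimately have "coeff (\<Sum>k\<le>N. smult (c k) (q k)) N \<noteq> 0" by (simp add: coeff_comb)
  then show ?thesis using deg_comb_le by (meson le_antisym le_degree)
qed

lemma cf_top: "h \<noteq> 0 \<Longrightarrow> cf h (degree h) \<noteq> 0"
proof -
  assume "h \<noteq> 0"
  have e: "h = (\<Sum>k\<le>degree h. smult (cf h k) (q k))" by (rule expand) simp
  have "lead_coeff h = cf h (degree h) * lead_coeff (q (degree h))"
    by (subst (1) e) (simp add: coeff_comb)
  then show ?thesis using \<open>h \<noteq> 0\<close> by auto
qed

end

definition Mm :: "(nat \<Rightarrow> nat \<Rightarrow> 'a) \<Rightarrow> nat \<Rightarrow> nat \<Rightarrow> 'a::zero" where
  "Mm a i k = (if i \<le> k then a i (k - i) else 0)"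

lemma reindex_sum:
  fixes h :: "nat \<Rightarrow> 'a::comm_semiring_1"
  assumes h: "\<forall>k>D. h k = 0" and DN: "D \<le> N"
  shows "(\<Sum>j\<le>D. a i j * h (i+j)) = (\<Sum>k\<le>N. Mm a i k * h k)"
proof -
  have 1: "(\<Sum>j\<le>D. a i j * h (i+j)) = (\<Sum>j\<le>N. a i j * h (i+j))"
    by (rule sum.mono_neutral_left) (use h DN in auto)
  have 2: "(\<Sum>k\<le>N. Mm a i k * h k) = (\<Sum>k\<le>N+i. Mm a i k * h k)"
    by (rule sum.mono_neutral_left) (use h DN in auto)
  have 3: "(\<Sum>k\<le>N+i. Mm a i k * h k) = (\<Sum>k\<in>{0+i..N+i}. Mm a i k * h k)"
    by (rule sum.mono_neutral_right) (auto simp: Mm_def)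
  have 4: "(\<Sum>k\<in>{0+i..N+i}. Mm a i k * h k) = (\<Sum>j\<in>{0..N}. Mm a i (j+i) * h (j+i))"
    by (rule sum.shift_bounds_cl_nat_ivl)
  have 5: "(\<Sum>j\<in>{0..N}. Mm a i (j+i) * h (j+i)) = (\<Sum>j\<le>N. a i j * h (i+j))"
    by (simp add: Mm_def atLeast0AtMost add.commute)
  show ?thesis using 1 2 3 4 5 by simp
qed

interpretation cpoly: comm_ring_hom "\<lambda>x::'a::comm_ring_1. [:x:]"
  by unfold_locales (simp_all add: one_pCons)

definition Am :: "(nat \<Rightarrow> nat \<Rightarrow> 'a::comm_ring_1) \<Rightarrow> nat \<Rightarrow> 'a mat" where
  "Am a n = mat (Suc n) (Suc n) (\<lambda>(i,j). Mm a i j)"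

definition Cf :: "(nat \<Rightarrow> nat \<Rightarrow> 'a::comm_ring_1) \<Rightarrow> nat \<Rightarrow> nat \<Rightarrow> 'a" where
  "Cf a n j = cofactor (Am a n) n j"

lemma cof_sum:
  fixes a :: "nat \<Rightarrow> nat \<Rightarrow> 'a::comm_ring_1"
  assumes "i \<le> n"
  shows "(\<Sum>j<Suc n. Mm a i j * Cf a n j) = (if i = n then (\<Prod>k\<le>n. a k 0) else 0)"
proof -
  define B where "B = mat (Suc n) (Suc n) (\<lambda>(r,j). if r = n then Mm a i j else Mm a r j)"
  have Bc: "B \<in> carrier_mat (Suc n) (Suc n)" unfolding B_def by simp
  have cof: "cofactor B n j = Cf a n j" for j
  proof -
    have "mat_delete B n j = mat_delete (Am a n) n j"
      by (rule eq_matI) (auto simp: mat_delete_def B_def Am_def)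
    then show ?thesis unfolding Cf_def cofactor_def by simp
  qed
  have "det B = (\<Sum>j<Suc n. B $$ (n,j) * cofactor B n j)"
    by (rule laplace_expansion_row[OF Bc]) simp
  also have "\<dots> = (\<Sum>j<Suc n. Mm a i j * Cf a n j)"
  proof (rule sum.cong)
    fix j assume "j \<in> {..<Suc n}"
    then have "B $$ (n,j) = Mm a i j" by (simp add: B_def)
    then show "B $$ (n,j) * cofactor B n j = Mm a i j * Cf a n j" by (simp add: cof)
  qed simp
  finally have eq: "det B = (\<Sum>j<Suc n. Mm a i j * Cf a n j)" .
  show ?thesis
  proof (cases "i = n")
    case False
    then have "i < n" using assms by simp
    have "row B i = row B n"
      by (rule eq_vecI) (use \<open>i < n\<close> in \<open>auto simp: B_def\<close>)
    then have "det B = 0"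
      using det_identical_rows[OF Bc False] \<open>i < n\<close> by auto
    then show ?thesis using eq False by simp
  next
    case True
    have "B = Am a n" by (rule eq_matI) (auto simp: B_def Am_def True)
    moreover have "upper_triangular (Am a n)"
      unfolding upper_triangular_def by (auto simp: Am_def Mm_def)
    moreover have "Am a n \<in> carrier_mat (Suc n) (Suc n)" by (simp add: Am_def)
    ultimately have "det B = prod_list (diag_mat (Am a n))"
      using det_upper_triangular by metis
    also have "\<dots> = prod_list (map (\<lambda>k. a k 0) [0..<Suc n])"
      unfolding diag_mat_def by (intro arg_cong[where f=prod_list] map_cong) (auto simp: Am_def Mm_def)
    also have "\<dots> = (\<Prod>k\<in>set [0..<Suc n]. a k 0)"
      by (rule prod.distinct_set_conv_list[symmetric]) simp
    also have "\<dots> = (\<Prod>k\<le>n. a k 0)"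
      by (simp only: set_upt atLeast0LessThan lessThan_Suc_atMost)
    finally show ?thesis using eq True by simp
  qed
qed

lemma det_Lambda:
  fixes a :: "nat \<Rightarrow> nat \<Rightarrow> 'a::field_char_0"
  shows "det (Lambda_mat a p n) = (\<Sum>j<Suc n. smult (Cf a n j) (smult (1 / fact j) (p j)))"
proof -
  define L where "L = Lambda_mat a p n"
  have Lc: "L \<in> carrier_mat (Suc n) (Suc n)" unfolding L_def Lambda_mat_def by simp
  have cof: "cofactor L n j = [: Cf a n j :]" for j
  proof -
    have "mat_delete L n j = map_mat (\<lambda>x. [:x:]) (mat_delete (Am a n) n j)"
      by (rule eq_matI) (auto simp: mat_delete_def L_def Am_def Lambda_mat_def Mm_def)
    then show ?thesis unfolding Cf_def cofactor_def
      by (simp add: cpoly.hom_det hom_distribs)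
  qed
  have "det L = (\<Sum>j<Suc n. L $$ (n,j) * cofactor L n j)"
    by (rule laplace_expansion_row[OF Lc]) simp
  also have "\<dots> = (\<Sum>j<Suc n. smult (Cf a n j) (smult (1 / fact j) (p j)))"
  proof (rule sum.cong)
    fix j assume "j \<in> {..<Suc n}"
    then have "L $$ (n,j) = smult (1 / fact j) (p j)" by (simp add: L_def Lambda_mat_def)
    then show "L $$ (n,j) * cofactor L n j = smult (Cf a n j) (smult (1 / fact j) (p j))"
      by (simp add: cof)
  qed simp
  finally show ?thesis unfolding L_def .
qed

context dsetting
begin

lemma Phi_eq:
  assumes "degree g \<le> N"
  shows "poly (Phi a d i g) 0 = (\<Sum>k\<le>N. Mm a i k * cf g k)"
proof -
  have "poly (Phi a d i g) 0 = (\<Sum>j\<le>degree g. a i j * cf g (i+j))"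
    unfolding Phi_def cf_def by (simp add: poly_sum)
  also have "\<dots> = (\<Sum>k\<le>N. Mm a i k * cf g k)"
    by (rule reindex_sum) (use assms cf_zero in auto)
  finally show ?thesis .
qed

lemma L_diff: "poly (Phi a d i (g - h)) 0 = poly (Phi a d i g) 0 - poly (Phi a d i h) 0"
proof -
  define N where "N = max (degree g) (degree h)"
  have "degree (g - h) \<le> N" unfolding N_def by (rule degree_diff_le_max)
  then show ?thesis
    by (simp add: Phi_eq[of _ N] N_def cf_diff right_diff_distrib sum_subtractf)
qed

lemma L_comb:
  fixes N :: nat
  assumes "\<forall>n\<le>N. degree (G n) \<le> D"
  shows "poly (Phi a d i (\<Sum>n\<le>N. smult (c n) (G n))) 0 = (\<Sum>n\<le>N. c n * poly (Phi a d i (G n)) 0)"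
proof -
  have dg: "degree (\<Sum>n\<le>N. smult (c n) (G n)) \<le> D"
    by (intro degree_sum_le order.trans[OF degree_smult_le]) (use assms in simp_all)
  have "poly (Phi a d i (\<Sum>n\<le>N. smult (c n) (G n))) 0
        = (\<Sum>k\<le>D. Mm a i k * (\<Sum>n\<le>N. c n * cf (G n) k))"
    by (simp add: Phi_eq[OF dg] cf_sum cf_smult)
  also have "\<dots> = (\<Sum>n\<le>N. c n * (\<Sum>k\<le>D. Mm a i k * cf (G n) k))"
    by (simp add: sum_distrib_left sum.swap[of _ "{..D}"] mult_ac)
  also have "\<dots> = (\<Sum>n\<le>N. c n * poly (Phi a d i (G n)) 0)"
    by (rule sum.cong) (use assms in \<open>auto simp: Phi_eq\<close>)
  finally show ?thesis .
qed

lemma L_zero_imp: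
  assumes a0: "\<forall>i. a i 0 \<noteq> 0" and dh: "degree h \<le> N"
    and L0: "\<forall>i\<le>N. poly (Phi a d i h) 0 = 0"
  shows "h = 0"
proof (rule ccontr)
  assume "h \<noteq> 0"
  define m where "m = degree h"
  have "poly (Phi a d m h) 0 = (\<Sum>k\<le>N. Mm a m k * cf h k)" by (rule Phi_eq[OF dh])
  also have "\<dots> = Mm a m m * cf h m + (\<Sum>k\<in>{..N}-{m}. Mm a m k * cf h k)"
    by (subst sum.remove[of _ m]) (use dh in \<open>auto simp: m_def\<close>)
  also have "(\<Sum>k\<in>{..N}-{m}. Mm a m k * cf h k) = 0"
    by (intro sum.neutral) (auto simp: Mm_def m_def cf_zero)
  finally have "poly (Phi a d m h) 0 = a m 0 * cf h m" by (simp add: Mm_def)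
  moreover have "cf h m \<noteq> 0" using cf_top[OF \<open>h \<noteq> 0\<close>] m_def by simp
  ultimately have "poly (Phi a d m h) 0 \<noteq> 0" using a0 by simp
  then show False using L0 dh m_def by auto
qed

lemma F_expr:
  "smult (fact n / (\<Prod>k\<le>n. a k 0)) (det (Lambda_mat a p n))
     = (\<Sum>j\<le>n. smult (fact n / (\<Prod>k\<le>n. a k 0) * Cf a n j) (q j))"
  by (simp add: det_Lambda q_def lessThan_Suc_atMost smult_sum_right)

lemma F_props:
  fixes n :: nat
  assumes a0: "\<forall>i. a i 0 \<noteq> 0"
  defines "F \<equiv> smult (fact n / (\<Prod>k\<le>n. a k 0)) (det (Lambda_mat a p n))"
  shows "degree F = n" "poly (Phi a d i F) 0 = (if i = n then fact n else 0)"
proof -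
  define P where "P = (\<Prod>k\<le>n. (a k 0::'a))"
  have P0: "P \<noteq> 0" unfolding P_def using a0 by simp
  define c where "c j = fact n / P * Cf a n j" for j
  have Fe: "F = (\<Sum>j\<le>n. smult (c j) (q j))" unfolding F_def c_def P_def by (rule F_expr)
  have cs: "(\<Sum>j\<le>n. Mm a i j * Cf a n j) = (if i = n then P else 0)" if "i \<le> n" for i
    using cof_sum[OF that, of a] by (simp add: lessThan_Suc_atMost P_def)
  have "(\<Sum>j\<le>n. Mm a n j * Cf a n j) = (\<Sum>j<n. Mm a n j * Cf a n j) + a n 0 * Cf a n n"
    by (simp add: lessThan_Suc_atMost[symmetric] Mm_def)
  also have "(\<Sum>j<n. Mm a n j * Cf a n j) = 0" by (intro sum.neutral) (auto simp: Mm_def)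
  finally have "a n 0 * Cf a n n = P" using cs[of n] by simp
  then have "Cf a n n \<noteq> 0" using P0 by auto
  then have "c n \<noteq> 0" unfolding c_def using P0 by simp
  then show "degree F = n" unfolding Fe by (rule deg_comb_eq)
  have "poly (Phi a d i F) 0 = (\<Sum>k\<le>n. Mm a i k * cf F k)"
    by (rule Phi_eq) (simp add: Fe deg_comb_le)
  also have "\<dots> = (\<Sum>k\<le>n. Mm a i k * c k)"
    by (rule sum.cong) (auto simp: Fe cf_comb)
  also have "\<dots> = fact n / P * (\<Sum>k\<le>n. Mm a i k * Cf a n k)"
    by (simp add: c_def sum_distrib_left mult_ac)
  also have "\<dots> = (if i = n then fact n else 0)"
  proof (cases "i \<le> n")
    case True then show ?thesis using cs P0 by simp
  next
    case False
    then have "(\<Sum>k\<le>n. Mm a i k * Cf a n k) = 0" by (intro sum.neutral) (auto simp: Mm_def)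
    then show ?thesis using False by simp
  qed
  finally show "poly (Phi a d i F) 0 = (if i = n then fact n else 0)" .
qed

end

theorem mainTheorem1:
  fixes d :: "'a::field_char_0 poly \<Rightarrow> 'a poly"
    and p :: "nat \<Rightarrow> 'a poly"
    and a :: "nat \<Rightarrow> nat \<Rightarrow> 'a"
  assumes "delta_op d"
    and "basic_seq d p"
    and "\<forall>i. a i 0 \<noteq> 0"
  shows "(\<exists>!f :: nat \<Rightarrow> 'a poly. (\<forall>n. degree (f n) = n) \<and>
            (\<forall>i n. poly (Phi a d i (f n)) 0 = (if i = n then fact n else 0)))
       \<and> (\<forall>f :: nat \<Rightarrow> 'a poly. ((\<forall>n. degree (f n) = n) \<and>
            (\<forall>i n. poly (Phi a d i (f n)) 0 = (if i = n then fact n else 0))) \<longrightarrow>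
            (\<forall>n. f n = smult (fact n / (\<Prod>k\<le>n. a k 0)) (det (Lambda_mat a p n)))
            \<and> poly_seq_basis f
            \<and> (\<forall>g. g = (\<Sum>n\<le>degree g. smult (poly (Phi a d n g) 0 / fact n) (f n))))"
proof -
  interpret dsetting d p using assms(1,2) by unfold_locales
  define F where "F n = smult (fact n / (\<Prod>k\<le>n. a k 0)) (det (Lambda_mat a p n))" for n
  have degF: "degree (F n) = n" for n unfolding F_def using F_props(1)[of a, OF assms(3)] by simp
  have LF: "poly (Phi a d i (F n)) 0 = (if i = n then fact n else 0)" for i n
    unfolding F_def using F_props(2)[of a, OF assms(3)] by simp
  have uniq: "f = F" if G: "(\<forall>n. degree (f n) = n) \<and>
            (\<forall>i n. poly (Phi a d i (f n)) 0 = (if i = n then fact n else 0))" for f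
  proof
    fix n
    have "f n - F n = 0"
    proof (rule L_zero_imp[of a, OF assms(3), of _ n])
      show "degree (f n - F n) \<le> n" using G degF by (simp add: degree_diff_le)
      show "\<forall>i\<le>n. poly (Phi a d i (f n - F n)) 0 = 0" using G LF by (simp add: L_diff)
    qed
    then show "f n = F n" by simp
  qed
  have comb: "poly (Phi a d i (\<Sum>n\<le>N. smult (c n) (F n))) 0 = c i * fact i" if "i \<le> N" for i N c
  proof -
    have "poly (Phi a d i (\<Sum>n\<le>N. smult (c n) (F n))) 0 = (\<Sum>n\<le>N. c n * poly (Phi a d i (F n)) 0)"
      by (rule L_comb[where D = N]) (simp add: degF)
    also have "\<dots> = (\<Sum>n\<le>N. (if i = n then c n * fact n else 0))"
      by (rule sum.cong) (auto simp: LF)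
    also have "\<dots> = c i * fact i" using that by (simp add: sum.delta)
    finally show ?thesis .
  qed
  have expansion: "g = (\<Sum>n\<le>degree g. smult (poly (Phi a d n g) 0 / fact n) (F n))" for g
  proof -
    let ?S = "\<Sum>n\<le>degree g. smult (poly (Phi a d n g) 0 / fact n) (F n)"
    have "g - ?S = 0"
    proof (rule L_zero_imp[of a, OF assms(3), of _ "degree g"])
      have dS: "degree ?S \<le> degree g"
        by (intro degree_sum_le order.trans[OF degree_smult_le]) (simp_all add: degF)
      show "degree (g - ?S) \<le> degree g" using dS by (simp add: degree_diff_le)
      show "\<forall>i\<le>degree g. poly (Phi a d i (g - ?S)) 0 = 0"
        by (auto simp: L_diff comb)
    qed
    then show ?thesis by simp
  qed
  have Phi0: "poly (Phi a d i 0) 0 = 0" for i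
    unfolding Phi_def by (simp add: dpow_zero0)
  have basis: "poly_seq_basis F"
    unfolding poly_seq_basis_def
  proof (intro conjI allI impI)
    fix g
    show "\<exists>c N. g = (\<Sum>n\<le>N. smult (c n) (F n))" using expansion[of g]
      by (intro exI[of _ "\<lambda>n. poly (Phi a d n g) 0 / fact n"] exI[of _ "degree g"])
  next
    fix c N n
    assume s: "(\<Sum>n\<le>N. smult (c n) (F n)) = 0" and n: "n \<le> N"
    have "c n * fact n = 0" using comb[OF n, of c] s Phi0 by simp
    then show "c n = 0" by simp
  qed
  show ?thesis
  proof (intro conjI allI impI)
    show "\<exists>!f :: nat \<Rightarrow> 'a poly. (\<forall>n. degree (f n) = n) \<and>
            (\<forall>i n. poly (Phi a d i (f n)) 0 = (if i = n then fact n else 0))"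
      by (rule ex1I[of _ F]) (use degF LF uniq in auto)
  next
    fix f :: "nat \<Rightarrow> 'a poly"
    assume G: "(\<forall>n. degree (f n) = n) \<and>
            (\<forall>i n. poly (Phi a d i (f n)) 0 = (if i = n then fact n else 0))"
    then have fF: "f = F" by (rule uniq)
    show "f n = smult (fact n / (\<Prod>k\<le>n. a k 0)) (det (Lambda_mat a p n))" for n
      using fF F_def by simp
    show "poly_seq_basis f" using fF basis by simp
    show "g = (\<Sum>n\<le>degree g. smult (poly (Phi a d n g) 0 / fact n) (f n))" for g
      using fF expansion by simp
  qed
qed

end
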